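(* Let $G$ be a finite connected graph with $\operatorname{diam}(G) = 2$. Then $\mathrm{gp_e}(G) = m(G)$, where $m(G)$ denotes the number of edges of $G$.
   Context: A geodesic in a graph is a shortest path between two vertices. A set $S$ of edges of a graph $G$ is an edge general position set if no geodesic of $G$ contains three edges of $S$. The edge general position number $\mathrm{gp_e}(G)$ is the maximum cardinality of an edge general position set of $G$. $\operatorname{diam}(G)$ is the maximum distance between two vertices of $G$. *)

theory Defs
  imports Main
begin

definition finite_simple_graph :: "'a set \<Rightarrow> 'a set set \<Rightarrow> bool" where
  "finite_simple_graph V E \<longleftrightarrow> finite V \<and>
     (\<forall>e\<in>E. \<exists>u v. e = {u, v} \<and> u \<in> V \<and> v \<in> V \<and> u \<noteq> v)"

definition is_walk :: "'a set \<Rightarrow> 'a set set \<Rightarrow> 'a list \<Rightarrow> bool" where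
  "is_walk V E xs \<longleftrightarrow> xs \<noteq> [] \<and> set xs \<subseteq> V \<and>
     (\<forall>i. Suc i < length xs \<longrightarrow> {xs ! i, xs ! Suc i} \<in> E)"

definition walk_edges :: "'a list \<Rightarrow> 'a set set" where
  "walk_edges xs = {{xs ! i, xs ! Suc i} | i. Suc i < length xs}"

definition connected_graph :: "'a set \<Rightarrow> 'a set set \<Rightarrow> bool" where
  "connected_graph V E \<longleftrightarrow>
     (\<forall>u\<in>V. \<forall>v\<in>V. \<exists>xs. is_walk V E xs \<and> hd xs = u \<and> last xs = v)"

definition gdist :: "'a set \<Rightarrow> 'a set set \<Rightarrow> 'a \<Rightarrow> 'a \<Rightarrow> nat" where
  "gdist V E u v = (LEAST n. \<exists>xs. is_walk V E xs \<and> hd xs = u \<and> last xs = v \<and> length xs = Suc n)"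

definition diam :: "'a set \<Rightarrow> 'a set set \<Rightarrow> nat" where
  "diam V E = Max {gdist V E u v | u v. u \<in> V \<and> v \<in> V}"

definition is_geodesic :: "'a set \<Rightarrow> 'a set set \<Rightarrow> 'a list \<Rightarrow> bool" where
  "is_geodesic V E xs \<longleftrightarrow> is_walk V E xs \<and> length xs = Suc (gdist V E (hd xs) (last xs))"

definition edge_gp_set :: "'a set \<Rightarrow> 'a set set \<Rightarrow> 'a set set \<Rightarrow> bool" where
  "edge_gp_set V E S \<longleftrightarrow> S \<subseteq> E \<and>
     (\<forall>xs. is_geodesic V E xs \<longrightarrow> card (walk_edges xs \<inter> S) < 3)"

definition gp_e :: "'a set \<Rightarrow> 'a set set \<Rightarrow> nat" where
  "gp_e V E = Max (card ` {S. edge_gp_set V E S})"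

end

theory Submission
  imports Defs
begin

lemma walk_edges_fin: "finite (walk_edges xs)"
proof -
  have "walk_edges xs = (\<lambda>i. {xs ! i, xs ! Suc i}) ` {..<length xs - 1}"
    unfolding walk_edges_def by auto
  then show ?thesis by simp
qed

lemma walk_edges_card: "card (walk_edges xs) \<le> length xs - 1"
proof -
  have "walk_edges xs = (\<lambda>i. {xs ! i, xs ! Suc i}) ` {..<length xs - 1}"
    unfolding walk_edges_def by auto
  then show ?thesis using card_image_le[of "{..<length xs - 1}" "\<lambda>i. {xs ! i, xs ! Suc i}"]
    by simp
qed

theorem lemma2p1:
  fixes V :: "'a set" and E :: "'a set set"
  assumes "finite_simple_graph V E"
    and "connected_graph V E"
    and "diam V E = 2"
  shows "gp_e V E = card E"
proof -
  have fV: "finite V" using assms(1) unfolding finite_simple_graph_def by auto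
  have EP: "E \<subseteq> Pow V" using assms(1) unfolding finite_simple_graph_def by auto
  have fE: "finite E" using finite_subset[OF EP] fV by auto
  have fD: "finite {gdist V E u v | u v. u \<in> V \<and> v \<in> V}"
  proof -
    have "{gdist V E u v | u v. u \<in> V \<and> v \<in> V} = (\<lambda>(u,v). gdist V E u v) ` (V \<times> V)" by auto
    then show ?thesis using fV by simp
  qed
  have dle: "gdist V E u v \<le> 2" if "u \<in> V" "v \<in> V" for u v
  proof -
    have "gdist V E u v \<le> diam V E" unfolding diam_def
      by (rule Max_ge[OF fD]) (use that in blast)
    then show ?thesis using assms(3) by simp
  qed
  have gpE: "edge_gp_set V E E"
    unfolding edge_gp_set_def
  proof (intro conjI allI impI)
    fix xs assume g: "is_geodesic V E xs"
    then have w: "is_walk V E xs" and l: "length xs = Suc (gdist V E (hd xs) (last xs))"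
      unfolding is_geodesic_def by auto
    have "hd xs \<in> V" "last xs \<in> V" using w unfolding is_walk_def by auto
    then have "length xs \<le> 3" using l dle by fastforce
    then have "card (walk_edges xs) \<le> 2" using walk_edges_card[of xs] by linarith
    moreover have "finite (walk_edges xs)"
      by (rule walk_edges_fin)
    ultimately show "card (walk_edges xs \<inter> E) < 3"
      using card_mono[of "walk_edges xs" "walk_edges xs \<inter> E"] by auto
  qed simp
  have fS: "finite (card ` {S. edge_gp_set V E S})"
  proof -
    have "{S. edge_gp_set V E S} \<subseteq> Pow E" unfolding edge_gp_set_def by auto
    then show ?thesis using fE finite_subset by blast
  qed
  show ?thesis unfolding gp_e_def
  proof (rule Max_eqI[OF fS])
    fix y assume "y \<in> card ` {S. edge_gp_set V E S}"
    then obtain S where "edge_gp_set V E S" "y = card S" by auto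
    then show "y \<le> card E" using fE card_mono unfolding edge_gp_set_def by blast
  next
    show "card E \<in> card ` {S. edge_gp_set V E S}" using gpE by auto
  qed
qed

end
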